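(* Let $D$ be an arc-colored digraph of order $n\geq 4$ containing no rainbow triangle, and let $v\in V(D)$ be such that $D-v\cong\overleftrightarrow{K}_{n-1}$ and $d^{s}(v)\geq 3$. Then $CN^{-}(v)\cap C^{s}(v)=\emptyset$ or $CN^{+}(v)\cap C^{s}(v)=\emptyset$. Moreover, if in addition $D\cong\overleftrightarrow{K}_4$, then $c(D)\leq 5$.
   Context: All digraphs are finite, without loops or multiple arcs (opposite arcs allowed); $\overleftrightarrow{K}_{m}$ is the complete digraph on $m$ vertices. An arc-coloring is any map $C:A(D)\to\mathbb{N}$; $c(D)$ is the number of colors used. A rainbow triangle is a directed 3-cycle with pairwise distinct arc colors. $CN^{-}(v)$ (resp. $CN^{+}(v)$) is the set of colors on the arcs entering (resp. leaving) $v$. A color $c\in C(D)$ is saturated by $v$ if every arc of color $c$ is incident to $v$; $C^{s}(v)$ is the set of colors saturated by $v$ and $d^{s}(v)=|C^{s}(v)|$. *)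

theory Defs
  imports Main
begin

text \<open>Opposite arcs are allowed, multiple arcs are impossible since A is a set.
  An arc-colouring is any map C :: 'a \<times> 'a \<Rightarrow> nat (only its values on A matter).\<close>

definition digraph :: "'a set \<Rightarrow> ('a \<times> 'a) set \<Rightarrow> bool" where
  "digraph V A \<longleftrightarrow> finite V \<and> A \<subseteq> V \<times> V \<and> (\<forall>x. (x, x) \<notin> A)"

definition complete_digraph :: "'a set \<Rightarrow> ('a \<times> 'a) set \<Rightarrow> bool" where
  "complete_digraph V A \<longleftrightarrow> A = {(x, y). x \<in> V \<and> y \<in> V \<and> x \<noteq> y}"

definition del_vertex_arcs :: "('a \<times> 'a) set \<Rightarrow> 'a \<Rightarrow> ('a \<times> 'a) set" where
  "del_vertex_arcs A v = {e \<in> A. fst e \<noteq> v \<and> snd e \<noteq> v}"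

definition colors :: "('a \<times> 'a) set \<Rightarrow> ('a \<times> 'a \<Rightarrow> nat) \<Rightarrow> nat set" where
  "colors A C = C ` A"

definition num_colors :: "('a \<times> 'a) set \<Rightarrow> ('a \<times> 'a \<Rightarrow> nat) \<Rightarrow> nat" where
  "num_colors A C = card (colors A C)"

definition rainbow_triangle ::
  "('a \<times> 'a) set \<Rightarrow> ('a \<times> 'a \<Rightarrow> nat) \<Rightarrow> 'a \<Rightarrow> 'a \<Rightarrow> 'a \<Rightarrow> bool" where
  "rainbow_triangle A C x y z \<longleftrightarrow>
     x \<noteq> y \<and> y \<noteq> z \<and> x \<noteq> z \<and>
     (x, y) \<in> A \<and> (y, z) \<in> A \<and> (z, x) \<in> A \<and>
     C (x, y) \<noteq> C (y, z) \<and> C (y, z) \<noteq> C (z, x) \<and> C (x, y) \<noteq> C (z, x)"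

definition no_rainbow_triangle :: "('a \<times> 'a) set \<Rightarrow> ('a \<times> 'a \<Rightarrow> nat) \<Rightarrow> bool" where
  "no_rainbow_triangle A C \<longleftrightarrow> (\<forall>x y z. \<not> rainbow_triangle A C x y z)"

definition in_colors :: "('a \<times> 'a) set \<Rightarrow> ('a \<times> 'a \<Rightarrow> nat) \<Rightarrow> 'a \<Rightarrow> nat set" where
  "in_colors A C v = {C (u, v) | u. (u, v) \<in> A}"

definition out_colors :: "('a \<times> 'a) set \<Rightarrow> ('a \<times> 'a \<Rightarrow> nat) \<Rightarrow> 'a \<Rightarrow> nat set" where
  "out_colors A C v = {C (v, u) | u. (v, u) \<in> A}"

definition saturated_colors :: "('a \<times> 'a) set \<Rightarrow> ('a \<times> 'a \<Rightarrow> nat) \<Rightarrow> 'a \<Rightarrow> nat set" where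
  "saturated_colors A C v =
     {c \<in> colors A C. \<forall>e \<in> A. C e = c \<longrightarrow> fst e = v \<or> snd e = v}"

definition sat_degree :: "('a \<times> 'a) set \<Rightarrow> ('a \<times> 'a \<Rightarrow> nat) \<Rightarrow> 'a \<Rightarrow> nat" where
  "sat_degree A C v = card (saturated_colors A C v)"

end

theory Submission
  imports Defs
begin

lemma sub3_eq:
  assumes "S \<subseteq> {x, y, z}" and "3 \<le> card S"
  shows "S = {x, y, z}"
proof (rule ccontr)
  assume "S \<noteq> {x, y, z}"
  then have "S \<subset> {x,y,z}" using assms(1) by blast
  then have "card S < card {x,y,z}" by (simp add: psubset_card_mono)
  moreover have "card {x,y,z} \<le> 3" using card_length[of "[x,y,z]"] by simp
  ultimately show False using assms(2) by simp
qed

lemma card5: "card {a1,a2,a3,a4,a5} \<le> 5"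
  using card_length[of "[a1,a2,a3,a4,a5]"] by simp

lemma k4_in:
  assumes dist: "distinct [v,a,b,c]"
    and AV: "A = {(x,y). x \<in> {v,a,b,c} \<and> y \<in> {v,a,b,c} \<and> x \<noteq> y}"
    and nr: "no_rainbow_triangle A C"
    and sat: "3 \<le> card (saturated_colors A C v)"
    and inS: "in_colors A C v \<inter> saturated_colors A C v = {}"
  shows "card (C ` A) \<le> 5"
proof -
  let ?S = "saturated_colors A C v"
  have notS: "\<And>x y. (x,y)\<in>A \<Longrightarrow> x\<noteq>v \<Longrightarrow> y\<noteq>v \<Longrightarrow> C(x,y) \<notin> ?S"
    by (auto simp: saturated_colors_def)
  have inN: "\<And>x. (x,v)\<in>A \<Longrightarrow> C(x,v) \<notin> ?S" using inS by (auto simp: in_colors_def)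
  have Ssub: "?S \<subseteq> {C(v,a),C(v,b),C(v,c)}"
  proof
    fix s assume s: "s \<in> ?S"
    then obtain e where e: "e \<in> A" "s = C e" "fst e = v \<or> snd e = v"
      by (auto simp: saturated_colors_def colors_def)
    obtain x y where xy: "e = (x,y)" by fastforce
    show "s \<in> {C(v,a),C(v,b),C(v,c)}"
    proof (cases "x = v")
      case True then show ?thesis using e xy AV by auto
    next
      case False then have "y = v" using e xy by auto
      then show ?thesis using inN[of x] e xy s by auto
    qed
  qed
  have Seq: "?S = {C(v,a),C(v,b),C(v,c)}" using sub3_eq[OF Ssub sat] .
  have eq: "C(x,y) = C(y,v)" if "x\<in>{a,b,c}" "y\<in>{a,b,c}" "x\<noteq>y" for x y
  proof -
    have arcs: "(v,x)\<in>A" "(x,y)\<in>A" "(y,v)\<in>A" using that dist AV by auto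
    have "C(v,x) \<in> ?S" using Seq that by auto
    moreover have "C(x,y) \<notin> ?S" using notS arcs that dist by auto
    moreover have "C(y,v) \<notin> ?S" using inN arcs by auto
    moreover have "\<not> rainbow_triangle A C v x y" using nr by (simp add: no_rainbow_triangle_def)
    ultimately show ?thesis using arcs that dist by (auto simp: rainbow_triangle_def)
  qed
  have "\<not> rainbow_triangle A C a b c" using nr by (simp add: no_rainbow_triangle_def)
  then have tri: "C(a,b) = C(b,c) \<or> C(b,c) = C(c,a) \<or> C(a,b) = C(c,a)"
    using dist AV by (auto simp: rainbow_triangle_def)
  have ab: "C(a,b) = C(b,v)" and bc: "C(b,c) = C(c,v)" and ca: "C(c,a) = C(a,v)"
    using eq dist by auto
  have sub: "C ` A \<subseteq> {C(v,a),C(v,b),C(v,c),C(a,v),C(b,v),C(c,v)}"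
  proof
    fix s assume "s \<in> C ` A"
    then obtain x y where "(x,y) \<in> A" "s = C(x,y)" by auto
    then show "s \<in> {C(v,a),C(v,b),C(v,c),C(a,v),C(b,v),C(c,v)}"
      using AV eq[of x y] by auto
  qed
  from tri ab bc ca consider "C(b,v) = C(c,v)" | "C(c,v) = C(a,v)" | "C(b,v) = C(a,v)" by auto
  then show ?thesis
  proof cases
    case 1
    then have "C ` A \<subseteq> {C(v,a),C(v,b),C(v,c),C(a,v),C(b,v)}" using sub by auto
    then show ?thesis using card5 card_mono[OF finite.insertI] order_trans by (metis finite.emptyI finite.insertI)
  next
    case 2
    then have "C ` A \<subseteq> {C(v,a),C(v,b),C(v,c),C(a,v),C(b,v)}" using sub by auto
    then show ?thesis using card5 card_mono order_trans by (metis finite.emptyI finite.insertI)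
  next
    case 3
    then have "C ` A \<subseteq> {C(v,a),C(v,b),C(v,c),C(a,v),C(c,v)}" using sub by auto
    then show ?thesis using card5 card_mono order_trans by (metis finite.emptyI finite.insertI)
  qed
qed

lemma k4_out:
  assumes dist: "distinct [v,a,b,c]"
    and AV: "A = {(x,y). x \<in> {v,a,b,c} \<and> y \<in> {v,a,b,c} \<and> x \<noteq> y}"
    and nr: "no_rainbow_triangle A C"
    and sat: "3 \<le> card (saturated_colors A C v)"
    and outS: "out_colors A C v \<inter> saturated_colors A C v = {}"
  shows "card (C ` A) \<le> 5"
proof -
  let ?S = "saturated_colors A C v"
  have notS: "\<And>x y. (x,y)\<in>A \<Longrightarrow> x\<noteq>v \<Longrightarrow> y\<noteq>v \<Longrightarrow> C(x,y) \<notin> ?S"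
    by (auto simp: saturated_colors_def)
  have outN: "\<And>x. (v,x)\<in>A \<Longrightarrow> C(v,x) \<notin> ?S" using outS by (auto simp: out_colors_def)
  have Ssub: "?S \<subseteq> {C(a,v),C(b,v),C(c,v)}"
  proof
    fix s assume s: "s \<in> ?S"
    then obtain e where e: "e \<in> A" "s = C e" "fst e = v \<or> snd e = v"
      by (auto simp: saturated_colors_def colors_def)
    obtain x y where xy: "e = (x,y)" by fastforce
    show "s \<in> {C(a,v),C(b,v),C(c,v)}"
    proof (cases "y = v")
      case True then show ?thesis using e xy AV by auto
    next
      case False then have "x = v" using e xy by auto
      then show ?thesis using outN[of y] e xy s by auto
    qed
  qed
  have Seq: "?S = {C(a,v),C(b,v),C(c,v)}" using sub3_eq[OF Ssub sat] .
  have eq: "C(y,x) = C(v,y)" if "x\<in>{a,b,c}" "y\<in>{a,b,c}" "x\<noteq>y" for x y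
  proof -
    have arcs: "(x,v)\<in>A" "(v,y)\<in>A" "(y,x)\<in>A" using that dist AV by auto
    have "C(x,v) \<in> ?S" using Seq that by auto
    moreover have "C(y,x) \<notin> ?S" using notS arcs that dist by auto
    moreover have "C(v,y) \<notin> ?S" using outN arcs by auto
    moreover have "\<not> rainbow_triangle A C x v y" using nr by (simp add: no_rainbow_triangle_def)
    ultimately show ?thesis using arcs that dist by (auto simp: rainbow_triangle_def)
  qed
  have "\<not> rainbow_triangle A C a b c" using nr by (simp add: no_rainbow_triangle_def)
  then have tri: "C(a,b) = C(b,c) \<or> C(b,c) = C(c,a) \<or> C(a,b) = C(c,a)"
    using dist AV by (auto simp: rainbow_triangle_def)
  have ab: "C(a,b) = C(v,a)" and bc: "C(b,c) = C(v,b)" and ca: "C(c,a) = C(v,c)"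
    using eq dist by auto
  have sub: "C ` A \<subseteq> {C(a,v),C(b,v),C(c,v),C(v,a),C(v,b),C(v,c)}"
  proof
    fix s assume "s \<in> C ` A"
    then obtain x y where "(x,y) \<in> A" "s = C(x,y)" by auto
    then show "s \<in> {C(a,v),C(b,v),C(c,v),C(v,a),C(v,b),C(v,c)}"
      using AV eq[of y x] by auto
  qed
  from tri ab bc ca consider "C(v,a) = C(v,b)" | "C(v,b) = C(v,c)" | "C(v,a) = C(v,c)" by auto
  then show ?thesis
  proof cases
    case 1
    then have "C ` A \<subseteq> {C(a,v),C(b,v),C(c,v),C(v,b),C(v,c)}" using sub by auto
    then show ?thesis using card5 card_mono order_trans by (metis finite.emptyI finite.insertI)
  next
    case 2
    then have "C ` A \<subseteq> {C(a,v),C(b,v),C(c,v),C(v,a),C(v,c)}" using sub by auto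
    then show ?thesis using card5 card_mono order_trans by (metis finite.emptyI finite.insertI)
  next
    case 3
    then have "C ` A \<subseteq> {C(a,v),C(b,v),C(c,v),C(v,a),C(v,b)}" using sub by auto
    then show ?thesis using card5 card_mono order_trans by (metis finite.emptyI finite.insertI)
  qed
qed

lemma part1:
  assumes dg: "digraph V A"
    and nr: "no_rainbow_triangle A C"
    and cd: "complete_digraph (V - {v}) (del_vertex_arcs A v)"
    and sat: "sat_degree A C v \<ge> 3"
  shows "in_colors A C v \<inter> saturated_colors A C v = {} \<or>
          out_colors A C v \<inter> saturated_colors A C v = {}"
proof (rule ccontr)
  let ?S = "saturated_colors A C v"
  assume "\<not> ?thesis"
  then obtain p q where p: "p \<in> in_colors A C v" "p \<in> ?S" and q: "q \<in> out_colors A C v" "q \<in> ?S"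
    by blast
  obtain u where u: "(u,v) \<in> A" "C(u,v) = p" using p by (auto simp: in_colors_def)
  obtain w where w: "(v,w) \<in> A" "C(v,w) = q" using q by (auto simp: out_colors_def)
  have K: "C(x,v) = C(v,y)" if "x \<noteq> y" "(x,v)\<in>A" "(v,y)\<in>A" "C(x,v)\<in>?S" "C(v,y)\<in>?S" for x y
  proof -
    have "x \<in> V" "y \<in> V" "x \<noteq> v" "y \<noteq> v" using dg that by (auto simp: digraph_def)
    then have yx: "(y,x) \<in> A" using cd that(1) by (auto simp: complete_digraph_def del_vertex_arcs_def)
    have "C(y,x) \<notin> ?S" using yx \<open>x \<noteq> v\<close> \<open>y \<noteq> v\<close> by (auto simp: saturated_colors_def)
    moreover have "\<not> rainbow_triangle A C x v y" using nr by (simp add: no_rainbow_triangle_def)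
    ultimately show ?thesis using that yx \<open>x \<noteq> v\<close> \<open>y \<noteq> v\<close> by (auto simp: rainbow_triangle_def)
  qed
  have Sinc: "\<exists>x. ((x,v)\<in>A \<and> C(x,v) = s) \<or> ((v,x)\<in>A \<and> C(v,x) = s)" if sS: "s \<in> ?S" for s
  proof -
    obtain e where e: "e \<in> A" "s = C e" "fst e = v \<or> snd e = v"
      using sS unfolding saturated_colors_def colors_def by blast
    then show ?thesis by (cases e) auto
  qed
  have "\<exists>r1 r2. ?S \<subseteq> {r1, r2}"
  proof (cases "u = w")
    case True
    have "?S \<subseteq> {p, q}"
    proof
      fix s assume s: "s \<in> ?S"
      then obtain x where "((x,v)\<in>A \<and> C(x,v) = s) \<or> ((v,x)\<in>A \<and> C(v,x) = s)" using Sinc by blast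
      then show "s \<in> {p,q}"
        using K[of x u] K[of u x] u w p q s True by (cases "x = u") auto
    qed
    then show ?thesis by blast
  next
    case False
    have pq: "p = q" using K[OF False u(1) w(1)] u w p q by simp
    show ?thesis
    proof (cases "(w,v) \<in> A \<and> C(w,v) \<in> ?S")
      case True
      have "?S \<subseteq> {p, C(w,v)}"
      proof
        fix s assume s: "s \<in> ?S"
        then obtain x where "((x,v)\<in>A \<and> C(x,v) = s) \<or> ((v,x)\<in>A \<and> C(v,x) = s)" using Sinc by blast
        then show "s \<in> {p,C(w,v)}"
          using K[of x w] K[of u x] K[of w u] u w p q s True False pq
          by (cases "x = u"; cases "x = w") auto
      qed
      then show ?thesis by blast
    next
      case nw: False
      have "?S \<subseteq> {p, C(v,u)}"
      proof
        fix s assume s: "s \<in> ?S"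
        then obtain x where "((x,v)\<in>A \<and> C(x,v) = s) \<or> ((v,x)\<in>A \<and> C(v,x) = s)" using Sinc by blast
        then show "s \<in> {p,C(v,u)}"
          using K[of x w] K[of u x] u w p q s nw False pq
          by (cases "x = u"; cases "x = w") auto
      qed
      then show ?thesis by blast
    qed
  qed
  then obtain r1 r2 where "?S \<subseteq> {r1, r2}" by blast
  then have "card ?S \<le> card {r1, r2}" by (rule card_mono[rotated]) simp
  also have "\<dots> \<le> 2" using card_length[of "[r1,r2]"] by simp
  finally show False using sat by (simp add: sat_degree_def)
qed

theorem lemma1:
  fixes V :: "'a set" and A :: "('a \<times> 'a) set" and C :: "'a \<times> 'a \<Rightarrow> nat" and v :: 'a
  assumes "digraph V A"
    and "card V \<ge> 4"
    and "no_rainbow_triangle A C"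
    and "v \<in> V"
    and "complete_digraph (V - {v}) (del_vertex_arcs A v)"
    and "sat_degree A C v \<ge> 3"
  shows "(in_colors A C v \<inter> saturated_colors A C v = {} \<or>
          out_colors A C v \<inter> saturated_colors A C v = {})
       \<and> (complete_digraph V A \<and> card V = 4 \<longrightarrow> num_colors A C \<le> 5)"
proof
  show P1: "in_colors A C v \<inter> saturated_colors A C v = {} \<or>
          out_colors A C v \<inter> saturated_colors A C v = {}"
    by (rule part1[OF assms(1,3,5,6)])
  show "complete_digraph V A \<and> card V = 4 \<longrightarrow> num_colors A C \<le> 5"
  proof
    assume h: "complete_digraph V A \<and> card V = 4"
    have fin: "finite V" using assms(1) by (simp add: digraph_def)
    have "card (V - {v}) = 3" using h fin assms(4) by simp
    then obtain a b c where abc: "V - {v} = {a,b,c}" "a \<noteq> b" "b \<noteq> c" "a \<noteq> c"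
      by (auto simp: card_3_iff)
    have Veq: "V = {v,a,b,c}" using abc(1) assms(4) by blast
    have dist: "distinct [v,a,b,c]" using abc by auto
    have AV: "A = {(x,y). x \<in> {v,a,b,c} \<and> y \<in> {v,a,b,c} \<and> x \<noteq> y}"
      using h Veq by (simp add: complete_digraph_def)
    have sat: "3 \<le> card (saturated_colors A C v)" using assms(6) by (simp add: sat_degree_def)
    have "card (C ` A) \<le> 5"
      using P1 k4_in[OF dist AV assms(3) sat] k4_out[OF dist AV assms(3) sat] by blast
    then show "num_colors A C \<le> 5" by (simp add: num_colors_def colors_def)
  qed
qed

end
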